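(* Let $(E,\rho)$ be a Polish metric space and $\Psi$ an $E$-valued time-homogeneous Markov process with transition semigroup $\{P(t)\}_{t\geq 0}$ and initial distribution $\mu$ on $(\Omega,\mathcal{F},\mathbb{P}_\mu)$. Let $V:E\to[0,\infty)$ be continuous and assume: (a) $P(t)(C_b(E))\subset C_b(E)$ for all $t\geq0$; (b) $\{P(t)\}$ has a unique invariant probability measure $\mu_*$, and there are $\gamma>0$ and $C:\{\nu\in\mathcal{M}_1(E):\int V\,d\nu<\infty\}\to[0,\infty)$ with $d_{\mathrm{FM}}(\nu P(t),\mu_* )\leq C(\nu)e^{-\gamma t}$ for all $t\geq0$ and such $\nu$, where $C(\delta_x)=\varkappa(V(x)+1)^{1/2}$ for some $\varkappa>0$; (c) there exist $A,B\geq 0$, $\Gamma>0$ with $P(t)V^2(x)\leq Ae^{-\Gamma t}V^2(x)+B$ for all $x,t$; (d) $\int_E V^2\,d\mu<\infty$. Fix $g\in\operatorname{Lip}_b(E)$, let $\bar g=g-\int g\,d\mu_*$, $\chi(x)=\int_0^\infty P(t)\bar g(x)\,dt$, and $Z(n)=\chi(\Psi(n))-\chi(\Psi(n-1))+\int_{n-1}^n\bar g(\Psi(s))\,ds$ for $n\in\mathbb{N}$. Then for every $\varepsilon>0$, $$\lim_{n\to\infty}\frac1n\sum_{i=0}^{n-1}\mathbb{E}_\mu\left(Z(i+1)^2\mathbb{1}_{\{|Z(i+1)|\geq\varepsilon\sqrt n\}}\right)=0.$$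
   Context: $\mathcal{M}_1(E)$: Borel probability measures; $\operatorname{Lip}_b(E)$: bounded Lipschitz functions with $\|f\|_{\mathrm{BL}}=\max\{\|f\|_\infty,\sup_{x\neq y}|f(x)-f(y)|/\rho(x,y)\}$; $d_{\mathrm{FM}}(\mu,\nu)=\sup\{|\int f\,d\mu-\int f\,d\nu|:\|f\|_{\mathrm{BL}}\leq1\}$. $P(t)f(x)=\int f(y)P(t)(x,dy)$, $\nu P(t)=\int P(t)(x,\cdot)\nu(dx)$. *)

theory Defs
  imports "HOL-Probability.Probability"
begin

definition prob_measures :: "('e::topological_space) measure set" where
  "prob_measures = {\<nu>. prob_space \<nu> \<and> sets \<nu> = sets borel}"

definition Lip_b :: "('e::metric_space \<Rightarrow> real) set" where
  "Lip_b = {f. bounded (range f) \<and> (\<exists>L. L-lipschitz_on UNIV f)}"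

definition BL_unit_ball :: "('e::metric_space \<Rightarrow> real) set" where
  "BL_unit_ball = {f. (\<forall>x. \<bar>f x\<bar> \<le> 1) \<and> (\<forall>x y. \<bar>f x - f y\<bar> \<le> dist x y)}"

definition d_FM :: "('e::metric_space) measure \<Rightarrow> 'e measure \<Rightarrow> real" where
  "d_FM \<mu> \<nu> = (SUP f\<in>BL_unit_ball. \<bar>integral\<^sup>L \<mu> f - integral\<^sup>L \<nu> f\<bar>)"

definition Pfun :: "(real \<Rightarrow> 'e \<Rightarrow> 'e measure) \<Rightarrow> real \<Rightarrow> ('e \<Rightarrow> real) \<Rightarrow> 'e \<Rightarrow> real" where
  "Pfun P t f x = integral\<^sup>L (P t x) f"

definition Pmeas :: "(real \<Rightarrow> 'e \<Rightarrow> 'e measure) \<Rightarrow> real \<Rightarrow> 'e measure \<Rightarrow> 'e measure" where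
  "Pmeas P t \<nu> = \<nu> \<bind> P t"

definition transition_semigroup :: "(real \<Rightarrow> 'e::topological_space \<Rightarrow> 'e measure) \<Rightarrow> bool" where
  "transition_semigroup P \<longleftrightarrow>
     (\<forall>t\<ge>0. \<forall>x. prob_space (P t x) \<and> sets (P t x) = sets borel) \<and>
     (\<forall>t\<ge>0. P t \<in> measurable borel (subprob_algebra borel)) \<and>
     (\<forall>x. P 0 x = return borel x) \<and>
     (\<forall>s\<ge>0. \<forall>t\<ge>0. \<forall>x. P (s + t) x = P s x \<bind> P t)"

definition nat_filtration :: "'w measure \<Rightarrow> (real \<Rightarrow> 'w \<Rightarrow> 'e::topological_space) \<Rightarrow> real \<Rightarrow> 'w measure" where
  "nat_filtration M \<Psi> t =
     sigma (space M) (\<Union>r\<in>{0..t}. {\<Psi> r -` A \<inter> space M | A. A \<in> sets borel})"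

definition markov_process ::
  "'w measure \<Rightarrow> (real \<Rightarrow> 'w \<Rightarrow> 'e::topological_space) \<Rightarrow> (real \<Rightarrow> 'e \<Rightarrow> 'e measure) \<Rightarrow> bool" where
  "markov_process M \<Psi> P \<longleftrightarrow>
     prob_space M \<and> transition_semigroup P \<and>
     (\<lambda>p. \<Psi> (fst p) (snd p)) \<in> measurable (restrict_space lborel {0..} \<Otimes>\<^sub>M M) borel \<and>
     (\<forall>t\<ge>0. \<forall>s\<ge>0. \<forall>A\<in>sets borel.
        AE \<omega> in M. real_cond_exp M (nat_filtration M \<Psi> t) (\<lambda>\<omega>. indicator A (\<Psi> (t + s) \<omega>)) \<omega>
                    = measure (P s (\<Psi> t \<omega>)) A)"

definition invariant_measure :: "(real \<Rightarrow> 'e \<Rightarrow> 'e measure) \<Rightarrow> 'e::topological_space measure \<Rightarrow> bool" where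
  "invariant_measure P \<nu> \<longleftrightarrow> \<nu> \<in> prob_measures \<and> (\<forall>t\<ge>0. Pmeas P t \<nu> = \<nu>)"

end

theory Submission
  imports Defs
begin

lemma abs_integral_le_AE:
  fixes F G :: "'a \<Rightarrow> real"
  assumes "integrable M G" "AE x in M. \<bar>F x\<bar> \<le> G x"
  shows "\<bar>integral\<^sup>L M F\<bar> \<le> integral\<^sup>L M G"
proof (cases "integrable M F")
  case True
  have "\<bar>integral\<^sup>L M F\<bar> \<le> (\<integral>x. \<bar>F x\<bar> \<partial>M)"
    using integral_norm_bound[of M F] by simp
  also have "\<dots> \<le> integral\<^sup>L M G"
    by (rule integral_mono_AE) (use True assms in auto)
  finally show ?thesis .
next
  case False
  have "0 \<le> integral\<^sup>L M G"
    by (rule integral_nonneg_AE) (use assms(2) in \<open>auto elim: eventually_mono\<close>)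
  then show ?thesis using not_integrable_integral_eq[OF False] by simp
qed

lemma abs_integral_le_const:
  fixes F :: "'a \<Rightarrow> real"
  assumes "prob_space M" "\<And>x. \<bar>F x\<bar> \<le> c"
  shows "\<bar>integral\<^sup>L M F\<bar> \<le> c"
proof -
  interpret prob_space M by fact
  have "\<bar>integral\<^sup>L M F\<bar> \<le> integral\<^sup>L M (\<lambda>_. c)"
    by (rule abs_integral_le_AE) (use assms(2) in auto)
  then show ?thesis by (simp add: prob_space)
qed

lemma FM_bound:
  fixes g :: "'e::metric_space \<Rightarrow> real"
  assumes N: "prob_space N" "sets N = sets borel" and Q: "prob_space Q" "sets Q = sets borel"
    and gb: "\<And>x. \<bar>g x\<bar> \<le> G0" and gl: "\<And>x y. \<bar>g x - g y\<bar> \<le> L * dist x y"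
    and G0: "0 \<le> G0" and L: "0 \<le> L"
  shows "\<bar>\<integral>y. (g y - integral\<^sup>L Q g) \<partial>N\<bar> \<le> (max G0 L + 1) * d_FM N Q"
proof -
  define c where "c = max G0 L + 1"
  have cpos: "c > 0" using G0 L unfolding c_def by auto
  have "L-lipschitz_on UNIV g" unfolding lipschitz_on_def using L gl by (simp add: dist_real_def)
  then have "continuous_on UNIV g" by (rule lipschitz_on_continuous_on)
  then have gm: "g \<in> borel_measurable borel" by (rule borel_measurable_continuous_onI)
  have gmN: "g \<in> borel_measurable N" using gm by (subst measurable_cong_sets[OF N(2) refl])
  have gmQ: "g \<in> borel_measurable Q" using gm by (subst measurable_cong_sets[OF Q(2) refl])
  have gN: "integrable N g"
    by (rule finite_measure.integrable_const_bound[OF prob_space.axioms(1)[OF N(1)] _ gmN, where B=G0])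
       (simp add: gb)
  have gQ: "integrable Q g"
    by (rule finite_measure.integrable_const_bound[OF prob_space.axioms(1)[OF Q(1)] _ gmQ, where B=G0])
       (simp add: gb)
  have eq: "(\<integral>y. (g y - integral\<^sup>L Q g) \<partial>N) = integral\<^sup>L N g - integral\<^sup>L Q g"
  proof -
    interpret NP: prob_space N by (rule N(1))
    show ?thesis using gN by (subst Bochner_Integration.integral_diff) (auto simp: NP.prob_space)
  qed
  define f where "f = (\<lambda>x. g x / c)"
  have fB: "f \<in> BL_unit_ball"
  proof -
    have "\<bar>f x\<bar> \<le> 1" for x
      using gb[of x] cpos unfolding f_def c_def by (auto simp: abs_div divide_le_eq_1 )
    moreover have "\<bar>f x - f y\<bar> \<le> dist x y" for x y
    proof -
      have "\<bar>f x - f y\<bar> = \<bar>g x - g y\<bar> / c" unfolding f_def using cpos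
        by (simp add: diff_divide_distrib[symmetric] abs_div)
      also have "\<dots> \<le> L * dist x y / c" using gl[of x y] cpos by (simp add: divide_right_mono)
      also have "\<dots> \<le> dist x y" using cpos L unfolding c_def
        by (simp add: divide_le_eq mult.commute[of "dist x y"] mult_right_mono)
      finally show ?thesis .
    qed
    ultimately show ?thesis unfolding BL_unit_ball_def by auto
  qed
  have bdd: "bdd_above ((\<lambda>f. \<bar>integral\<^sup>L N f - integral\<^sup>L Q f\<bar>) ` BL_unit_ball)"
  proof (rule bdd_aboveI2)
    fix h :: "'e \<Rightarrow> real" assume "h \<in> BL_unit_ball"
    then have "\<And>x. \<bar>h x\<bar> \<le> 1" unfolding BL_unit_ball_def by auto
    then have "\<bar>integral\<^sup>L N h\<bar> \<le> 1" "\<bar>integral\<^sup>L Q h\<bar> \<le> 1"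
      using abs_integral_le_const N(1) Q(1) by blast+
    then show "\<bar>integral\<^sup>L N h - integral\<^sup>L Q h\<bar> \<le> 2" by linarith
  qed
  have "\<bar>integral\<^sup>L N f - integral\<^sup>L Q f\<bar> \<le> d_FM N Q"
    unfolding d_FM_def by (rule cSUP_upper[OF fB bdd])
  moreover have "\<bar>integral\<^sup>L N f - integral\<^sup>L Q f\<bar> = \<bar>integral\<^sup>L N g - integral\<^sup>L Q g\<bar> / c"
    unfolding f_def integral_divide_zero using cpos
    by (simp add: diff_divide_distrib[symmetric] abs_div)
  ultimately have "\<bar>integral\<^sup>L N g - integral\<^sup>L Q g\<bar> \<le> c * d_FM N Q"
    using cpos by (simp add: divide_le_eq mult.commute)
  then show ?thesis unfolding eq c_def .
qed
lemma markov_meas: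
  assumes markov: "markov_process M \<Psi> P" and r: "0 \<le> r"
  shows "\<Psi> r \<in> M \<rightarrow>\<^sub>M borel"
proof -
  have j: "(\<lambda>p. \<Psi> (fst p) (snd p)) \<in> restrict_space lborel {0..} \<Otimes>\<^sub>M M \<rightarrow>\<^sub>M borel"
    using markov unfolding markov_process_def by blast
  have "r \<in> space (restrict_space lborel {0..})" using r by (simp add: space_restrict_space)
  from measurable_Pair2[OF j this] show ?thesis by simp
qed

lemma distr_Psi:
  fixes \<Psi> :: "real \<Rightarrow> 'w \<Rightarrow> 'e::topological_space"
  assumes markov: "markov_process M \<Psi> P" and init: "distr M borel (\<Psi> 0) = \<mu>" and s: "0 \<le> s"
  shows "distr M borel (\<Psi> s) = \<mu> \<bind> P s"
proof -
  have pM: "prob_space M" and TS: "transition_semigroup P"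
    and cond: "\<forall>t\<ge>0. \<forall>s\<ge>0. \<forall>A\<in>sets borel.
        AE \<omega> in M. real_cond_exp M (nat_filtration M \<Psi> t) (\<lambda>\<omega>. indicator A (\<Psi> (t + s) \<omega>)) \<omega>
                    = measure (P s (\<Psi> t \<omega>)) A"
    using markov unfolding markov_process_def by blast+
  interpret prob_space M by (rule pM)
  have Pk: "P s \<in> borel \<rightarrow>\<^sub>M subprob_algebra borel" and Psets: "\<And>x. sets (P s x) = sets borel"
    and Pprob: "\<And>x. prob_space (P s x)"
    using TS s unfolding transition_semigroup_def by blast+
  have m0: "\<Psi> 0 \<in> M \<rightarrow>\<^sub>M borel" and ms: "\<Psi> s \<in> M \<rightarrow>\<^sub>M borel"
    using markov_meas[OF markov] s by auto
  have smu: "sets \<mu> = sets borel" using init by auto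
  have spmu: "space \<mu> = UNIV" using init by auto
  have Pkmu: "P s \<in> \<mu> \<rightarrow>\<^sub>M subprob_algebra borel"
    using Pk by (subst measurable_cong_sets[OF smu refl])
  define F where "F = nat_filtration M \<Psi> 0"
  have Fgen: "(\<Union>r\<in>{0..0::real}. {\<Psi> r -` A \<inter> space M | A. A \<in> sets borel}) \<subseteq> sets M"
    using m0 by (auto simp: measurable_def)
  have subalg: "subalgebra M F"
    unfolding subalgebra_def F_def nat_filtration_def
  proof
    show "space (sigma (space M) (\<Union>r\<in>{0..0::real}. {\<Psi> r -` A \<inter> space M | A. A \<in> sets borel})) = space M"
      by (rule space_measure_of) auto
    show "sets (sigma (space M) (\<Union>r\<in>{0..0::real}. {\<Psi> r -` A \<inter> space M | A. A \<in> sets borel})) \<subseteq> sets M"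
    proof -
      have "(\<Union>r\<in>{0..0::real}. {\<Psi> r -` A \<inter> space M | A. A \<in> sets borel}) \<subseteq> Pow (space M)" (is "?G \<subseteq> _") by auto
      note sm = sets_measure_of[OF this]
      show ?thesis unfolding sm using sets.sigma_sets_subset[OF Fgen] .
    qed
  qed
  have sfs: "sigma_finite_subalgebra M F"
    by (rule sigma_finite_subalgebra.intro[OF subalg])
       (rule finite_measure.sigma_finite_measure[OF finite_measure_restr_to_subalg[OF subalg finite_measure_axioms]])
  show ?thesis
  proof (rule measure_eqI)
    show "sets (distr M borel (\<Psi> s)) = sets (\<mu> \<bind> P s)"
      using sets_bind[of \<mu> "P s" borel] Psets spmu by simp
  next
    fix A assume "A \<in> sets (distr M borel (\<Psi> s))"
    then have A: "A \<in> sets borel" by simp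
    have pre: "\<Psi> s -` A \<inter> space M \<in> sets M" using ms A by (simp add: measurable_sets)
    have ind_int: "integrable M (\<lambda>\<omega>. indicator A (\<Psi> s \<omega>) :: real)"
      by (rule integrable_const_bound[where B=1]) (use ms A in auto)
    have meask: "(\<lambda>x. measure (P s x) A) \<in> borel_measurable borel"
      using measurable_compose[OF Pk measurable_measure_subprob_algebra[OF A]] .
    have "emeasure (distr M borel (\<Psi> s)) A = emeasure M (\<Psi> s -` A \<inter> space M)"
      using ms A by (simp add: emeasure_distr)
    also have "\<dots> = ennreal (\<integral>\<omega>. indicator A (\<Psi> s \<omega>) \<partial>M)"
    proof -
      have "(\<integral>\<omega>. indicator A (\<Psi> s \<omega>) \<partial>M) = (\<integral>\<omega>. indicator (\<Psi> s -` A \<inter> space M) \<omega> \<partial>M)"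
        by (rule Bochner_Integration.integral_cong) (auto simp: indicator_def)
      also have "\<dots> = measure M (\<Psi> s -` A \<inter> space M)" using pre by simp
      finally show ?thesis using emeasure_eq_measure by simp
    qed
    also have "(\<integral>\<omega>. indicator A (\<Psi> s \<omega>) \<partial>M) = (\<integral>\<omega>. real_cond_exp M F (\<lambda>\<omega>. indicator A (\<Psi> (0 + s) \<omega>)) \<omega> \<partial>M)"
      using sigma_finite_subalgebra.real_cond_exp_int(2)[OF sfs ind_int] by simp
    also have "\<dots> = (\<integral>\<omega>. measure (P s (\<Psi> 0 \<omega>)) A \<partial>M)"
    proof (rule integral_cong_AE)
      show "real_cond_exp M F (\<lambda>\<omega>. indicator A (\<Psi> (0 + s) \<omega>)) \<in> borel_measurable M"
        by (rule borel_measurable_cond_exp2)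
      show "(\<lambda>\<omega>. measure (P s (\<Psi> 0 \<omega>)) A) \<in> borel_measurable M"
        using measurable_compose[OF m0 meask] .
      show "AE \<omega> in M. real_cond_exp M F (\<lambda>\<omega>. indicator A (\<Psi> (0 + s) \<omega>)) \<omega> = measure (P s (\<Psi> 0 \<omega>)) A"
        using cond s A unfolding F_def by auto
    qed
    also have "\<dots> = (\<integral>x. measure (P s x) A \<partial>\<mu>)"
      using integral_distr[OF m0 meask] init by simp
    also have "ennreal \<dots> = (\<integral>\<^sup>+x. ennreal (measure (P s x) A) \<partial>\<mu>)"
    proof -
      have pmu: "prob_space \<mu>" using init prob_space_distr[OF m0] by simp
      have "integrable \<mu> (\<lambda>x. measure (P s x) A)"
        by (rule finite_measure.integrable_const_bound[OF prob_space.axioms(1)[OF pmu], where B=1])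
           (use meask smu Pprob in \<open>auto simp: measurable_cong_sets[OF smu refl] prob_space.prob_le_1\<close>)
      then show ?thesis by (subst nn_integral_eq_integral) auto
    qed
    also have "\<dots> = (\<integral>\<^sup>+x. emeasure (P s x) A \<partial>\<mu>)"
      by (simp add: finite_measure.emeasure_eq_measure[OF prob_space.axioms(1)[OF Pprob]])
    also have "\<dots> = emeasure (\<mu> \<bind> P s) A"
      using emeasure_bind[OF _ Pkmu A] spmu by simp
    finally show "emeasure (distr M borel (\<Psi> s)) A = emeasure (\<mu> \<bind> P s) A" .
  qed
qed
lemma V2_moment:
  fixes \<Psi> :: "real \<Rightarrow> 'w \<Rightarrow> 'e::topological_space" and V :: "'e \<Rightarrow> real"
  assumes markov: "markov_process M \<Psi> P" and init: "distr M borel (\<Psi> 0) = \<mu>"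
    and Vm: "V \<in> borel_measurable borel"
    and AB: "A \<ge> 0" "B \<ge> 0"
    and lyap: "\<forall>t\<ge>0. \<forall>x. (\<integral>\<^sup>+y. ennreal ((V y)\<^sup>2) \<partial>(P t x))
                         \<le> ennreal (A * exp (- \<Gamma> * t) * (V x)\<^sup>2 + B)"
    and mom: "(\<integral>\<^sup>+x. ennreal ((V x)\<^sup>2) \<partial>\<mu>) = ennreal r" and r: "0 \<le> r"
    and t: "0 \<le> t" and \<Gamma>: "\<Gamma> > 0"
  shows "integrable M (\<lambda>\<omega>. (V (\<Psi> t \<omega>))\<^sup>2) \<and> (\<integral>\<omega>. (V (\<Psi> t \<omega>))\<^sup>2 \<partial>M) \<le> A * r + B"
proof -
  have TS: "transition_semigroup P" using markov unfolding markov_process_def by blast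
  have Pk: "P t \<in> borel \<rightarrow>\<^sub>M subprob_algebra borel"
    using TS t unfolding transition_semigroup_def by blast
  have mt: "\<Psi> t \<in> M \<rightarrow>\<^sub>M borel" using markov_meas[OF markov t] .
  have m0: "\<Psi> 0 \<in> M \<rightarrow>\<^sub>M borel" using markov_meas[OF markov] by simp
  have smu: "sets \<mu> = sets borel" using init by auto
  have pM: "prob_space M" using markov unfolding markov_process_def by blast
  have pmu: "prob_space \<mu>" using init prob_space.prob_space_distr[OF pM m0] by simp
  have Pkmu: "P t \<in> \<mu> \<rightarrow>\<^sub>M subprob_algebra borel"
    using Pk by (subst measurable_cong_sets[OF smu refl])
  have V2m: "(\<lambda>x. ennreal ((V x)\<^sup>2)) \<in> borel_measurable borel" using Vm by measurable
  have "(\<integral>\<^sup>+\<omega>. ennreal ((V (\<Psi> t \<omega>))\<^sup>2) \<partial>M) = (\<integral>\<^sup>+x. ennreal ((V x)\<^sup>2) \<partial>distr M borel (\<Psi> t))"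
    using V2m mt by (simp add: nn_integral_distr)
  also have "\<dots> = (\<integral>\<^sup>+x. ennreal ((V x)\<^sup>2) \<partial>(\<mu> \<bind> P t))"
    using distr_Psi[OF markov init t] by simp
  also have "\<dots> = (\<integral>\<^sup>+x. (\<integral>\<^sup>+y. ennreal ((V y)\<^sup>2) \<partial>P t x) \<partial>\<mu>)"
    by (rule nn_integral_bind[OF V2m Pkmu])
  also have "\<dots> \<le> (\<integral>\<^sup>+x. ennreal (A * (V x)\<^sup>2 + B) \<partial>\<mu>)"
  proof (rule nn_integral_mono)
    fix x
    have "A * exp (- \<Gamma> * t) * (V x)\<^sup>2 \<le> A * (V x)\<^sup>2"
      using AB t \<Gamma> by (intro mult_right_mono) (auto intro!: mult_left_le)
    then show "(\<integral>\<^sup>+y. ennreal ((V y)\<^sup>2) \<partial>P t x) \<le> ennreal (A * (V x)\<^sup>2 + B)"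
      using lyap t by (meson add_right_mono ennreal_leI order_trans)
  qed
  also have "\<dots> = ennreal (A * r + B)"
  proof -
    have "(\<integral>\<^sup>+x. ennreal (A * (V x)\<^sup>2 + B) \<partial>\<mu>) = (\<integral>\<^sup>+x. ennreal A * ennreal ((V x)\<^sup>2) + ennreal B \<partial>\<mu>)"
      using AB by (intro nn_integral_cong) (simp add: ennreal_plus ennreal_mult)
    also have "\<dots> = ennreal A * (\<integral>\<^sup>+x. ennreal ((V x)\<^sup>2) \<partial>\<mu>) + (\<integral>\<^sup>+x. ennreal B \<partial>\<mu>)"
      using V2m by (subst nn_integral_add) (auto simp: measurable_cong_sets[OF smu refl] nn_integral_cmult)
    also have "\<dots> = ennreal (A * r + B)"
      using mom AB r prob_space.emeasure_space_1[OF pmu] by (simp add: ennreal_plus ennreal_mult)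
    finally show ?thesis .
  qed
  finally have bound: "(\<integral>\<^sup>+\<omega>. ennreal ((V (\<Psi> t \<omega>))\<^sup>2) \<partial>M) \<le> ennreal (A * r + B)" .
  have fm: "(\<lambda>\<omega>. (V (\<Psi> t \<omega>))\<^sup>2) \<in> borel_measurable M" using Vm mt by measurable
  have int: "integrable M (\<lambda>\<omega>. (V (\<Psi> t \<omega>))\<^sup>2)"
    by (rule integrableI_bounded[OF fm]) (use bound in \<open>auto simp: order_le_less_trans\<close>)
  have "(\<integral>\<omega>. (V (\<Psi> t \<omega>))\<^sup>2 \<partial>M) = enn2real (\<integral>\<^sup>+\<omega>. ennreal ((V (\<Psi> t \<omega>))\<^sup>2) \<partial>M)"
    using fm by (simp add: integral_eq_nn_integral)
  also have "\<dots> \<le> A * r + B"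
    using bound AB r by (metis enn2real_ennreal enn2real_mono ennreal_neq_top top.not_eq_extremum add_nonneg_nonneg mult_nonneg_nonneg)
  finally show ?thesis using int by blast
qed
lemma chi_bound:
  fixes P :: "real \<Rightarrow> 'e::metric_space \<Rightarrow> 'e measure" and g V :: "'e \<Rightarrow> real"
  assumes TS: "transition_semigroup P"
    and Vm: "V \<in> borel_measurable borel"
    and conv: "\<forall>\<nu>\<in>prob_measures. (\<integral>\<^sup>+x. ennreal (V x) \<partial>\<nu>) < \<infinity> \<longrightarrow>
                 (\<forall>t\<ge>0. d_FM (Pmeas P t \<nu>) \<mu>s \<le> C \<nu> * exp (- \<gamma> * t))"
    and C_dirac: "\<forall>x. C (return borel x) = \<kappa> * sqrt (V x + 1)"
    and \<gamma>: "\<gamma> > 0" and \<kappa>: "\<kappa> > 0" and Vnn: "\<forall>x. V x \<ge> 0"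
    and mus: "prob_space \<mu>s" "sets \<mu>s = sets borel"
    and gb: "\<And>x. \<bar>g x\<bar> \<le> G0" and gl: "\<And>x y. \<bar>g x - g y\<bar> \<le> L * dist x y"
    and G0: "0 \<le> G0" and L: "0 \<le> L"
  shows "\<bar>LBINT t:{0..}. Pfun P t (\<lambda>x. g x - integral\<^sup>L \<mu>s g) x\<bar>
          \<le> (max G0 L + 1) * \<kappa> * sqrt (V x + 1) * (LBINT t:{0<..}. exp (- (t * \<gamma>)))"
proof -
  define K where "K = (max G0 L + 1) * \<kappa> * sqrt (V x + 1)"
  have pt: "\<bar>Pfun P t (\<lambda>x. g x - integral\<^sup>L \<mu>s g) x\<bar> \<le> K * exp (- (t * \<gamma>))" if t: "t \<ge> 0" for t
  proof -
    have Pk: "P t \<in> borel \<rightarrow>\<^sub>M subprob_algebra borel" and Ps: "sets (P t x) = sets borel"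
      and Pp: "prob_space (P t x)"
      using TS t unfolding transition_semigroup_def by blast+
    have rp: "return borel x \<in> prob_measures"
      unfolding prob_measures_def by (auto intro: prob_space_return)
    have "(\<integral>\<^sup>+y. ennreal (V y) \<partial>return borel x) = ennreal (V x)"
      using Vm by (simp add: nn_integral_return)
    then have fin: "(\<integral>\<^sup>+y. ennreal (V y) \<partial>return borel x) < \<infinity>" by simp
    have eqP: "Pmeas P t (return borel x) = P t x"
      unfolding Pmeas_def by (rule bind_return[OF Pk]) simp
    have dfm: "d_FM (P t x) \<mu>s \<le> \<kappa> * sqrt (V x + 1) * exp (- \<gamma> * t)"
      using conv rp fin t eqP C_dirac by metis
    have "\<bar>Pfun P t (\<lambda>x. g x - integral\<^sup>L \<mu>s g) x\<bar> \<le> (max G0 L + 1) * d_FM (P t x) \<mu>s"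
      unfolding Pfun_def by (rule FM_bound[OF Pp Ps mus gb gl G0 L])
    also have "\<dots> \<le> (max G0 L + 1) * (\<kappa> * sqrt (V x + 1) * exp (- \<gamma> * t))"
      using dfm G0 L by (intro mult_left_mono) auto
    finally show ?thesis unfolding K_def by (simp add: mult.commute mult.left_commute)
  qed
  have int: "set_integrable lborel {0<..} (\<lambda>t. K * exp (- (t * \<gamma>)))"
    by (rule set_integrable_mult_right) (rule integrable_I0i_exp_mscale[OF \<gamma>])
  have "\<bar>LBINT t:{0..}. Pfun P t (\<lambda>x. g x - integral\<^sup>L \<mu>s g) x\<bar>
        \<le> (LBINT t:{0<..}. K * exp (- (t * \<gamma>)))"
    unfolding set_lebesgue_integral_def
  proof (rule abs_integral_le_AE)
    show "integrable lborel (\<lambda>t. indicator {0<..} t *\<^sub>R (K * exp (- (t * \<gamma>))))"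
      using int unfolding set_integrable_def .
    show "AE t in lborel. \<bar>indicator {0..} t *\<^sub>R Pfun P t (\<lambda>x. g x - integral\<^sup>L \<mu>s g) x\<bar>
          \<le> indicator {0<..} t *\<^sub>R (K * exp (- (t * \<gamma>)))"
      using AE_lborel_singleton[of 0]
    proof (rule eventually_mono)
      fix t :: real assume "t \<noteq> 0"
      then show "\<bar>indicator {0..} t *\<^sub>R Pfun P t (\<lambda>x. g x - integral\<^sup>L \<mu>s g) x\<bar>
          \<le> indicator {0<..} t *\<^sub>R (K * exp (- (t * \<gamma>)))"
        using pt[of t] by (cases "t > 0") (auto simp: indicator_def)
    qed
  qed
  also have "\<dots> = K * (LBINT t:{0<..}. exp (- (t * \<gamma>)))"
    by (rule set_integral_mult_right)
  finally show ?thesis unfolding K_def .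
qed
lemma aux_sq3:
  fixes x y w :: real
  shows "(x + y + w)\<^sup>2 \<le> 3 * (x\<^sup>2 + y\<^sup>2 + w\<^sup>2)"
proof -
  have "0 \<le> (x - y)\<^sup>2 + (x - w)\<^sup>2 + (y - w)\<^sup>2" by simp
  then show ?thesis by (simp add: power2_eq_square algebra_simps)
qed

lemma aux_trunc:
  fixes z q e :: real
  assumes "z\<^sup>2 \<le> q" "0 < e"
  shows "z\<^sup>2 * indicator {\<omega>. e \<le> \<bar>z\<bar>} \<omega> \<le> q\<^sup>2 / e\<^sup>2"
proof (cases "e \<le> \<bar>z\<bar>")
  case True
  have e2: "e\<^sup>2 \<le> z\<^sup>2" using True assms(2) by (metis abs_of_pos power2_abs power_mono less_imp_le)
  have "z\<^sup>2 * e\<^sup>2 \<le> z\<^sup>2 * z\<^sup>2" using e2 by (intro mult_left_mono) auto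
  also have "\<dots> \<le> q * q" using assms(1) by (intro mult_mono) (auto intro: order_trans[OF zero_le_power2])
  finally have "z\<^sup>2 \<le> q\<^sup>2 / e\<^sup>2" using assms(2) by (simp add: le_divide_eq power2_eq_square)
  then show ?thesis using True by (simp add: indicator_def)
next
  case False
  then show ?thesis by (simp add: indicator_def)
qed

lemma aux_Z:
  fixes c1 c2 c3 K G0 a b :: real
  assumes "\<bar>c1\<bar> \<le> K * sqrt (a + 1)" "\<bar>c2\<bar> \<le> K * sqrt (b + 1)" "\<bar>c3\<bar> \<le> 2 * G0"
    and "0 \<le> a" "0 \<le> b" "0 \<le> K"
  shows "(c1 - c2 + c3)\<^sup>2 \<le> (6 * K\<^sup>2 + 12 * G0\<^sup>2) * (a + b + 1)"
proof -
  have s1: "c1\<^sup>2 \<le> K\<^sup>2 * (a + 1)"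
  proof -
    have "c1\<^sup>2 = \<bar>c1\<bar>\<^sup>2" by simp
    also have "\<dots> \<le> (K * sqrt (a + 1))\<^sup>2" using assms(1) by (intro power_mono) auto
    also have "\<dots> = K\<^sup>2 * (a + 1)" using assms(4) by (simp add: power_mult_distrib)
    finally show ?thesis .
  qed
  have s2: "c2\<^sup>2 \<le> K\<^sup>2 * (b + 1)"
  proof -
    have "c2\<^sup>2 = \<bar>c2\<bar>\<^sup>2" by simp
    also have "\<dots> \<le> (K * sqrt (b + 1))\<^sup>2" using assms(2) by (intro power_mono) auto
    also have "\<dots> = K\<^sup>2 * (b + 1)" using assms(5) by (simp add: power_mult_distrib)
    finally show ?thesis .
  qed
  have s3: "c3\<^sup>2 \<le> 4 * G0\<^sup>2"
  proof -
    have "c3\<^sup>2 = \<bar>c3\<bar>\<^sup>2" by simp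
    also have "\<dots> \<le> (2 * G0)\<^sup>2" using assms(3) by (intro power_mono) auto
    finally show ?thesis by (simp add: power_mult_distrib)
  qed
  have "(c1 - c2 + c3)\<^sup>2 \<le> 3 * (c1\<^sup>2 + (- c2)\<^sup>2 + c3\<^sup>2)" using aux_sq3[of c1 "-c2" c3] by simp
  also have "\<dots> \<le> 3 * (K\<^sup>2 * (a + 1) + K\<^sup>2 * (b + 1) + 4 * G0\<^sup>2)" using s1 s2 s3 by simp
  also have "\<dots> \<le> (6 * K\<^sup>2 + 12 * G0\<^sup>2) * (a + b + 1)"
  proof -
    have k: "0 \<le> K\<^sup>2" "0 \<le> G0\<^sup>2" by auto
    have "K\<^sup>2 * (a + 1) \<le> K\<^sup>2 * (a + b + 1)" "K\<^sup>2 * (b + 1) \<le> K\<^sup>2 * (a + b + 1)"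
      "G0\<^sup>2 \<le> G0\<^sup>2 * (a + b + 1)"
      using assms(4,5) k by (auto intro: mult_left_mono simp: mult_le_cancel_left1)
    then show ?thesis by (simp add: algebra_simps)
  qed
  finally show ?thesis .
qed
theorem lemma3p11:
  fixes M :: "'w measure" and \<Psi> :: "real \<Rightarrow> 'w \<Rightarrow> 'e::polish_space"
    and P :: "real \<Rightarrow> 'e \<Rightarrow> 'e measure" and \<mu> \<mu>s :: "'e measure"
    and V :: "'e \<Rightarrow> real" and C :: "'e measure \<Rightarrow> real"
    and \<gamma> \<kappa> A B \<Gamma> :: real and g :: "'e \<Rightarrow> real"
  assumes markov: "markov_process M \<Psi> P"
    and init: "distr M borel (\<Psi> 0) = \<mu>"
    and V_cont: "continuous_on UNIV V" and V_nonneg: "\<forall>x. V x \<ge> 0"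
    and feller: "\<forall>t\<ge>0. \<forall>f::'e \<Rightarrow> real. continuous_on UNIV f \<and> bounded (range f) \<longrightarrow>
                   continuous_on UNIV (Pfun P t f) \<and> bounded (range (Pfun P t f))"
    and inv: "invariant_measure P \<mu>s"
    and inv_unique: "\<forall>\<nu>. invariant_measure P \<nu> \<longrightarrow> \<nu> = \<mu>s"
    and \<gamma>_pos: "\<gamma> > 0"
    and C_nonneg: "\<forall>\<nu>\<in>prob_measures. (\<integral>\<^sup>+x. ennreal (V x) \<partial>\<nu>) < \<infinity> \<longrightarrow> C \<nu> \<ge> 0"
    and conv: "\<forall>\<nu>\<in>prob_measures. (\<integral>\<^sup>+x. ennreal (V x) \<partial>\<nu>) < \<infinity> \<longrightarrow>
                 (\<forall>t\<ge>0. d_FM (Pmeas P t \<nu>) \<mu>s \<le> C \<nu> * exp (- \<gamma> * t))"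
    and \<kappa>_pos: "\<kappa> > 0"
    and C_dirac: "\<forall>x. C (return borel x) = \<kappa> * sqrt (V x + 1)"
    and AB: "A \<ge> 0" "B \<ge> 0" and \<Gamma>_pos: "\<Gamma> > 0"
    and lyap: "\<forall>t\<ge>0. \<forall>x. (\<integral>\<^sup>+y. ennreal ((V y)\<^sup>2) \<partial>(P t x))
                         \<le> ennreal (A * exp (- \<Gamma> * t) * (V x)\<^sup>2 + B)"
    and mom: "(\<integral>\<^sup>+x. ennreal ((V x)\<^sup>2) \<partial>\<mu>) < \<infinity>"
    and g_lip: "g \<in> Lip_b"
  shows "let gbar = (\<lambda>x. g x - integral\<^sup>L \<mu>s g);
             chi = (\<lambda>x. LBINT t:{0..}. Pfun P t gbar x);
             Z = (\<lambda>(n::nat) \<omega>. chi (\<Psi> (real n) \<omega>) - chi (\<Psi> (real n - 1) \<omega>)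
                              + (LBINT s:{real n - 1..real n}. gbar (\<Psi> s \<omega>)))
         in \<forall>\<epsilon>>0. (\<lambda>n::nat. (1 / real n) * (\<Sum>i<n.
                  \<integral>\<omega>. (Z (i+1) \<omega>)\<^sup>2 * indicator {\<omega>. \<bar>Z (i+1) \<omega>\<bar> \<ge> \<epsilon> * sqrt (real n)} \<omega> \<partial>M))
              \<longlonglongrightarrow> 0"
proof -
  have pM: "prob_space M" and TS: "transition_semigroup P"
    using markov unfolding markov_process_def by blast+
  interpret prob_space M by (rule pM)
  obtain G0 where gb: "\<And>x. \<bar>g x\<bar> \<le> G0"
    using g_lip unfolding Lip_b_def bounded_iff by auto
  obtain L where Llip: "L-lipschitz_on UNIV g"
    using g_lip unfolding Lip_b_def by auto
  have L0: "0 \<le> L" and gl: "\<And>x y. \<bar>g x - g y\<bar> \<le> L * dist x y"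
    using Llip unfolding lipschitz_on_def by (auto simp: dist_real_def)
  have G00: "0 \<le> G0" using gb[of undefined] by linarith
  have mus: "prob_space \<mu>s" "sets \<mu>s = sets borel"
    using inv unfolding invariant_measure_def prob_measures_def by auto
  have Vm: "V \<in> borel_measurable borel" by (rule borel_measurable_continuous_onI[OF V_cont])
  obtain r where r0: "0 \<le> r" and rmom: "(\<integral>\<^sup>+x. ennreal ((V x)\<^sup>2) \<partial>\<mu>) = ennreal r"
    using mom by (cases "(\<integral>\<^sup>+x. ennreal ((V x)\<^sup>2) \<partial>\<mu>)") auto
  define gbar where "gbar = (\<lambda>x. g x - integral\<^sup>L \<mu>s g)"
  define chi where "chi = (\<lambda>x. LBINT t:{0..}. Pfun P t gbar x)"
  define Z where "Z = (\<lambda>(n::nat) \<omega>. chi (\<Psi> (real n) \<omega>) - chi (\<Psi> (real n - 1) \<omega>)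
                              + (LBINT s:{real n - 1..real n}. gbar (\<Psi> s \<omega>)))"
  define I where "I = (LBINT t:{0<..}. exp (- (t * \<gamma>)))"
  define K where "K = (max G0 L + 1) * \<kappa> * I"
  define D where "D = 6 * K\<^sup>2 + 12 * G0\<^sup>2"
  define E2 where "E2 = A * r + B"
  have I0: "0 \<le> I" unfolding I_def set_lebesgue_integral_def by (rule integral_nonneg_AE) (auto simp: indicator_def)
  have K0: "0 \<le> K" unfolding K_def using I0 \<kappa>_pos G00 L0 by simp
  have D0: "0 \<le> D" unfolding D_def by simp
  have E20: "0 \<le> E2" unfolding E2_def using AB r0 by simp
  have chib: "\<bar>chi x\<bar> \<le> K * sqrt (V x + 1)" for x
  proof -
    have "\<bar>chi x\<bar> \<le> (max G0 L + 1) * \<kappa> * sqrt (V x + 1) * I"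
      unfolding chi_def gbar_def I_def
      by (rule chi_bound[OF TS Vm conv C_dirac \<gamma>_pos \<kappa>_pos V_nonneg mus gb gl G00 L0])
    then show ?thesis unfolding K_def by (simp add: mult_ac)
  qed
  have mub: "\<bar>integral\<^sup>L \<mu>s g\<bar> \<le> G0" by (rule abs_integral_le_const[OF mus(1) gb])
  have gbarb: "\<bar>gbar y\<bar> \<le> 2 * G0" for y
    using gb[of y] mub unfolding gbar_def by linarith
  have intb: "\<bar>LBINT s:{a..a+1}. gbar (\<Psi> s \<omega>)\<bar> \<le> 2 * G0" for a :: real and \<omega>
  proof -
    have "\<bar>LBINT s:{a..a+1}. gbar (\<Psi> s \<omega>)\<bar> \<le> (\<integral>s. indicator {a..a+1} s *\<^sub>R (2 * G0) \<partial>lborel)"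
      unfolding set_lebesgue_integral_def
    proof (rule abs_integral_le_AE)
      show "integrable lborel (\<lambda>s. indicator {a..a+1} s *\<^sub>R (2 * G0))"
        by (intro integrable_scaleR_left integrable_real_indicator) auto
      show "AE s in lborel. \<bar>indicator {a..a+1} s *\<^sub>R gbar (\<Psi> s \<omega>)\<bar> \<le> indicator {a..a+1} s *\<^sub>R (2 * G0)"
        using gbarb by (auto simp: indicator_def)
    qed
    also have "\<dots> = 2 * G0" by simp
    finally show ?thesis .
  qed
  have Zb: "(Z (i+1) \<omega>)\<^sup>2 \<le> D * (V (\<Psi> (real i + 1) \<omega>) + V (\<Psi> (real i) \<omega>) + 1)" for i \<omega>
  proof -
    have "Z (i+1) \<omega> = chi (\<Psi> (real i + 1) \<omega>) - chi (\<Psi> (real i) \<omega>)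
                  + (LBINT s:{real i..real i + 1}. gbar (\<Psi> s \<omega>))"
      unfolding Z_def by (simp add: add.commute)
    then show ?thesis unfolding D_def
      using aux_Z[OF chib chib intb V_nonneg[rule_format] V_nonneg[rule_format] K0] by simp
  qed
  have mom2: "integrable M (\<lambda>\<omega>. (V (\<Psi> t \<omega>))\<^sup>2) \<and> (\<integral>\<omega>. (V (\<Psi> t \<omega>))\<^sup>2 \<partial>M) \<le> E2"
    if "0 \<le> t" for t
    unfolding E2_def
    by (rule V2_moment[OF markov init Vm AB lyap rmom r0 that \<Gamma>_pos])
  have main: "(\<lambda>n::nat. (1 / real n) * (\<Sum>i<n.
                  \<integral>\<omega>. (Z (i+1) \<omega>)\<^sup>2 * indicator {\<omega>. \<bar>Z (i+1) \<omega>\<bar> \<ge> \<epsilon> * sqrt (real n)} \<omega> \<partial>M))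
              \<longlonglongrightarrow> 0" if \<epsilon>: "\<epsilon> > 0" for \<epsilon>
  proof -
    define c0 where "c0 = 3 * D\<^sup>2 * (2 * E2 + 1) / \<epsilon>\<^sup>2"
    have termb: "\<bar>\<integral>\<omega>. (Z (i+1) \<omega>)\<^sup>2 * indicator {\<omega>. \<bar>Z (i+1) \<omega>\<bar> \<ge> \<epsilon> * sqrt (real n)} \<omega> \<partial>M\<bar>
                 \<le> c0 / real n" if n: "n \<ge> 1" for n i
    proof -
      define q where "q = 3 * D\<^sup>2 / (\<epsilon>\<^sup>2 * real n)"
      have q0: "0 \<le> q" unfolding q_def by simp
      define Ga where "Ga = (\<lambda>\<omega>. (V (\<Psi> (real i + 1) \<omega>))\<^sup>2)"
      define Gb where "Gb = (\<lambda>\<omega>. (V (\<Psi> (real i) \<omega>))\<^sup>2)"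
      have ia: "integrable M Ga" "integral\<^sup>L M Ga \<le> E2" using mom2[of "real i + 1"] unfolding Ga_def by auto
      have ib: "integrable M Gb" "integral\<^sup>L M Gb \<le> E2" using mom2[of "real i"] unfolding Gb_def by auto
      have e: "0 < \<epsilon> * sqrt (real n)" using \<epsilon> n by simp
      have e2: "(\<epsilon> * sqrt (real n))\<^sup>2 = \<epsilon>\<^sup>2 * real n" by (simp add: power_mult_distrib)
      have "\<bar>\<integral>\<omega>. (Z (i+1) \<omega>)\<^sup>2 * indicator {\<omega>. \<bar>Z (i+1) \<omega>\<bar> \<ge> \<epsilon> * sqrt (real n)} \<omega> \<partial>M\<bar>
            \<le> (\<integral>\<omega>. q * (Ga \<omega> + Gb \<omega> + 1) \<partial>M)"
      proof (rule abs_integral_le_AE)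
        show "integrable M (\<lambda>\<omega>. q * (Ga \<omega> + Gb \<omega> + 1))"
          using ia ib by auto
        show "AE \<omega> in M. \<bar>(Z (i+1) \<omega>)\<^sup>2 * indicator {\<omega>. \<bar>Z (i+1) \<omega>\<bar> \<ge> \<epsilon> * sqrt (real n)} \<omega>\<bar>
               \<le> q * (Ga \<omega> + Gb \<omega> + 1)"
        proof (rule AE_I2)
          fix \<omega>
          define a where "a = V (\<Psi> (real i + 1) \<omega>)"
          define b where "b = V (\<Psi> (real i) \<omega>)"
          have a0: "0 \<le> a" "0 \<le> b" unfolding a_def b_def using V_nonneg by auto
          have "(Z (i+1) \<omega>)\<^sup>2 * indicator {\<omega>. \<bar>Z (i+1) \<omega>\<bar> \<ge> \<epsilon> * sqrt (real n)} \<omega>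
                \<le> (D * (a + b + 1))\<^sup>2 / (\<epsilon> * sqrt (real n))\<^sup>2"
          proof -
            have "(Z (i+1) \<omega>)\<^sup>2 * indicator {\<omega>'. \<epsilon> * sqrt (real n) \<le> \<bar>Z (i+1) \<omega>\<bar>} \<omega>
                  \<le> (D * (a + b + 1))\<^sup>2 / (\<epsilon> * sqrt (real n))\<^sup>2"
              by (rule aux_trunc[OF _ e]) (use Zb[of i \<omega>] in \<open>simp add: a_def b_def\<close>)
            moreover have "indicator {\<omega>. \<bar>Z (i+1) \<omega>\<bar> \<ge> \<epsilon> * sqrt (real n)} \<omega>
                = (indicator {\<omega>'. \<epsilon> * sqrt (real n) \<le> \<bar>Z (i+1) \<omega>\<bar>} \<omega> :: real)"
              by (simp add: indicator_def)
            ultimately show ?thesis by simp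
          qed
          also have "\<dots> = D\<^sup>2 * (a + b + 1)\<^sup>2 / (\<epsilon>\<^sup>2 * real n)"
            by (simp add: e2 power_mult_distrib)
          also have "\<dots> \<le> D\<^sup>2 * (3 * (a\<^sup>2 + b\<^sup>2 + 1\<^sup>2)) / (\<epsilon>\<^sup>2 * real n)"
            using aux_sq3[of a b 1] by (intro divide_right_mono mult_left_mono) auto
          also have "\<dots> = q * (Ga \<omega> + Gb \<omega> + 1)"
            unfolding q_def Ga_def Gb_def a_def b_def by simp
          finally have "(Z (i+1) \<omega>)\<^sup>2 * indicator {\<omega>. \<bar>Z (i+1) \<omega>\<bar> \<ge> \<epsilon> * sqrt (real n)} \<omega>
                        \<le> q * (Ga \<omega> + Gb \<omega> + 1)" .
          then show "\<bar>(Z (i+1) \<omega>)\<^sup>2 * indicator {\<omega>. \<bar>Z (i+1) \<omega>\<bar> \<ge> \<epsilon> * sqrt (real n)} \<omega>\<bar>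
               \<le> q * (Ga \<omega> + Gb \<omega> + 1)" by (simp add: indicator_def)
        qed
      qed
      also have "(\<integral>\<omega>. q * (Ga \<omega> + Gb \<omega> + 1) \<partial>M) = q * (integral\<^sup>L M Ga + integral\<^sup>L M Gb + 1)"
        using ia ib by (simp add: prob_space)
      also have "\<dots> \<le> q * (2 * E2 + 1)"
        using ia ib q0 by (intro mult_left_mono) auto
      also have "\<dots> = c0 / real n" unfolding q_def c0_def by simp
      finally show ?thesis .
    qed
    show ?thesis
    proof (rule Lim_null_comparison)
      show "(\<lambda>n. c0 * (1 / real n)) \<longlonglongrightarrow> 0"
        using tendsto_mult_right_zero[OF lim_inverse_n'] by simp
      show "\<forall>\<^sub>F n in sequentially. norm ((1 / real n) * (\<Sum>i<n.
                  \<integral>\<omega>. (Z (i+1) \<omega>)\<^sup>2 * indicator {\<omega>. \<bar>Z (i+1) \<omega>\<bar> \<ge> \<epsilon> * sqrt (real n)} \<omega> \<partial>M))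
              \<le> c0 * (1 / real n)"
        using eventually_ge_at_top[of "1::nat"]
      proof (rule eventually_mono)
        fix n :: nat assume n: "1 \<le> n"
        have "norm ((1 / real n) * (\<Sum>i<n.
                  \<integral>\<omega>. (Z (i+1) \<omega>)\<^sup>2 * indicator {\<omega>. \<bar>Z (i+1) \<omega>\<bar> \<ge> \<epsilon> * sqrt (real n)} \<omega> \<partial>M))
              \<le> (1 / real n) * (\<Sum>i<n. \<bar>\<integral>\<omega>. (Z (i+1) \<omega>)\<^sup>2 * indicator {\<omega>. \<bar>Z (i+1) \<omega>\<bar> \<ge> \<epsilon> * sqrt (real n)} \<omega> \<partial>M\<bar>)"
          unfolding real_norm_def abs_mult by (intro mult_mono sum_abs) auto
        also have "\<dots> \<le> (1 / real n) * (\<Sum>i<n. c0 / real n)"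
          using termb[OF n] by (intro mult_left_mono sum_mono) auto
        also have "\<dots> = c0 * (1 / real n)" using n by simp
        finally show "norm ((1 / real n) * (\<Sum>i<n.
                  \<integral>\<omega>. (Z (i+1) \<omega>)\<^sup>2 * indicator {\<omega>. \<bar>Z (i+1) \<omega>\<bar> \<ge> \<epsilon> * sqrt (real n)} \<omega> \<partial>M))
              \<le> c0 * (1 / real n)" .
      qed
    qed
  qed
  show ?thesis unfolding Let_def using main unfolding Z_def chi_def gbar_def by blast
qed

end
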